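(* Let $n, f, d$ be integers with $d \ge 1$, $f \ge 0$ and $2f+2 < n$, and set $m = n-f-2$. Let $V_1,\dots,V_{n-f}$ be independent, identically distributed random vectors in $\mathbb{R}^d$ with $V_i \sim G$, where $\mathbb{E}G = g$ and $\mathbb{E}\lVert G - g\rVert^2 = d\sigma^2$. Let $B_1,\dots,B_f$ be arbitrary random vectors in $\mathbb{R}^d$, possibly dependent on the $V_i$'s. Define $$\eta(n,f) = \sqrt{2\Big(n-f + \frac{f\cdot m + f^2\cdot (m+1)}{m}\Big)}.$$ If $\eta(n,f)\sqrt{d}\,\sigma < \lVert g\rVert$, then the multi-Krum aggregation rule (with parameter $f$) is $(\alpha,f)$-Byzantine resilient, where $0 \le \alpha < \pi/2$ is defined by $$\sin\alpha = \frac{\eta(n,f)\cdot\sqrt{d}\cdot\sigma}{\lVert g\rVert}.$$ That is, for any placement of the $f$ vectors $B_1,\dots,B_f$ among the $n$ inputs (at positions $1\le j_1<\dots<j_f\le n$, the remaining positions filled by $V_1,\dots,V_{n-f}$), the output $\mathrm{GAR}$ of multi-Krum satisfies (i) $\langle \mathbb{E}\,\mathrm{GAR}, g\rangle \ge (1-\sin\alpha)\lVert g\rVert^2 > 0$, and (ii) for each $r \in \{2,3,4\}$, $\mathbb{E}\lVert \mathrm{GAR}\rVert^r$ is bounded above by a linear combination of terms of the form $\mathbb{E}\lVert G\rVert^{r_1}\cdots\mathbb{E}\lVert G\rVert^{r_{n-1}}$ with nonnegative integers $r_1+\dots+r_{n-1} = r$.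
   Context: Multi-Krum aggregation rule: given $n$ input vectors $X_1,\dots,X_n \in \mathbb{R}^d$ and a parameter $f$, for each $i$ let $N(i)$ be the set of indices of the $n-f-2$ vectors $X_j$ ($j\neq i$) closest to $X_i$ in Euclidean norm, and define the score $s(i) = \sum_{j \in N(i)} \lVert X_i - X_j\rVert^2$. Multi-Krum outputs the average of the $m = n-f-2$ vectors $X_i$ having the $m$ smallest scores $s(i)$. All expectations are over the randomness of the $V_i$'s (and the $B_k$'s). *)

theory Defs
  imports "HOL-Probability.Probability"
begin

text \<open>Inputs are indexed by positions 1..n.  The Krum score of input i is the sum of the
  m = n-f-2 smallest squared distances from X i to the other inputs X j (j ~= i), which is
  the sum over the n-f-2 nearest neighbours N(i) (independent of how ties are resolved).\<close>
definition krum_score :: "nat \<Rightarrow> nat \<Rightarrow> (nat \<Rightarrow> 'a::real_normed_vector) \<Rightarrow> nat \<Rightarrow> real" where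
  "krum_score n f X i =
     sum_list (take (n - f - 2)
       (sort (map (\<lambda>j. (norm (X i - X j))\<^sup>2) (filter (\<lambda>j. j \<noteq> i) [1..<n+1]))))"

text \<open>Indices of the m = n-f-2 inputs with the smallest scores (ties broken by smaller index,
  as sort_key is stable).\<close>
definition multi_krum_sel :: "nat \<Rightarrow> nat \<Rightarrow> (nat \<Rightarrow> 'a::real_normed_vector) \<Rightarrow> nat set" where
  "multi_krum_sel n f X = set (take (n - f - 2) (sort_key (krum_score n f X) [1..<n+1]))"

definition multi_krum :: "nat \<Rightarrow> nat \<Rightarrow> (nat \<Rightarrow> 'a::real_normed_vector) \<Rightarrow> 'a" where
  "multi_krum n f X = (1 / real (n - f - 2)) *\<^sub>R (\<Sum>i\<in>multi_krum_sel n f X. X i)"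

text \<open>Placement of the Byzantine vectors B_1..B_f at the positions in J (in increasing order);
  the remaining positions of {1..n} are filled by V_1..V_{n-f} in increasing order.\<close>
definition byz_inputs ::
  "nat \<Rightarrow> nat set \<Rightarrow> (nat \<Rightarrow> 'w \<Rightarrow> 'a) \<Rightarrow> (nat \<Rightarrow> 'w \<Rightarrow> 'a) \<Rightarrow> 'w \<Rightarrow> nat \<Rightarrow> 'a" where
  "byz_inputs n J V B \<omega> k =
     (if k \<in> J then B (card {i\<in>J. i \<le> k}) \<omega> else V (card {i\<in>{1..n} - J. i \<le> k}) \<omega>)"

definition eta :: "nat \<Rightarrow> nat \<Rightarrow> real" where
  "eta n f = (let m = real (n - f - 2) in
     sqrt (2 * (real (n - f) + (real f * m + (real f)\<^sup>2 * (m + 1)) / m)))"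

text \<open>Exponent tuples (r_1,...,r_k) (stored at indices 0..k-1) of nonnegative integers with sum r.\<close>
definition moment_exps :: "nat \<Rightarrow> nat \<Rightarrow> (nat \<Rightarrow> nat) set" where
  "moment_exps k r = {rs. (\<forall>i\<ge>k. rs i = 0) \<and> (\<Sum>i<k. rs i) = r}"

end

theory Submission
  imports Defs
begin


lemma map_insort_key: "map D (insort_key D x ys) = insort (D x) (map D ys)"
  by (induction ys) auto

lemma sort_map_key: "sort (map D xs) = map D (sort_key D xs)"
  by (induction xs) (auto simp: map_insort_key)

lemma insort_key_cong: "(\<And>y. y \<in> set (x#ys) \<Longrightarrow> f y = g y) \<Longrightarrow> insort_key f x ys = insort_key g x ys"
  by (induction ys) auto

lemma sort_key_cong': "(\<And>y. y \<in> set xs \<Longrightarrow> f y = g y) \<Longrightarrow> sort_key f xs = sort_key g xs"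
proof (induction xs)
  case Nil then show ?case by simp
next
  case (Cons x xs)
  then have "sort_key f xs = sort_key g xs" by auto
  then show ?case using Cons.prems by (auto intro!: insort_key_cong)
qed

lemma prefix_le:
  assumes "sorted (map d P)" "a \<in> set (take k P)" "b \<in> set (drop k P)"
  shows "d a \<le> d b"
proof -
  have "sorted (map d (take k P) @ map d (drop k P))"
    using assms(1) by (metis append_take_drop_id map_append)
  then show ?thesis using assms(2,3) by (auto simp: sorted_append)
qed

lemma double_sum_le:
  fixes d :: "'a \<Rightarrow> real"
  assumes "finite A" "finite B" "\<And>a b. a \<in> A \<Longrightarrow> b \<in> B \<Longrightarrow> d a \<le> d b"
  shows "real (card B) * sum d A \<le> real (card A) * sum d B"
proof -
  have "(\<Sum>a\<in>A. \<Sum>b\<in>B. d a) \<le> (\<Sum>a\<in>A. \<Sum>b\<in>B. d b)"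
    by (intro sum_mono) (use assms in auto)
  then show ?thesis by (simp add: sum_distrib_left sum_distrib_right mult.commute)
qed

lemma prefix_min:
  fixes d :: "'a \<Rightarrow> real"
  assumes dist: "distinct P" and srt: "sorted (map d P)" and T: "T \<subseteq> set P" "card T = k"
  shows "sum d (set (take k P)) \<le> sum d T"
proof -
  define A where "A = set (take k P)"
  have fT: "finite T" using T finite_subset by blast
  have kle: "k \<le> length P" using T card_mono[OF _ T(1)] by (metis List.finite_set dist distinct_card)
  have cA: "card A = k" unfolding A_def using dist kle by (simp add: distinct_card min_def)
  have setP: "set P = A \<union> set (drop k P)" unfolding A_def by (metis append_take_drop_id set_append)
  have disj: "A \<inter> set (drop k P) = {}" unfolding A_def
    using dist by (metis append_take_drop_id distinct_append)
  have TA: "T - A \<subseteq> set (drop k P)" using T setP by auto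
  have le: "\<And>a b. a \<in> A - T \<Longrightarrow> b \<in> T - A \<Longrightarrow> d a \<le> d b"
    using prefix_le[OF srt] TA unfolding A_def by blast
  have fA: "finite A" unfolding A_def by simp
  have cc: "card (A - T) = card (T - A)"
  proof -
    have "card (A - T) = card A - card (A \<inter> T)" by (metis Diff_Int2 card_Diff_subset_Int fA finite_Int)
    moreover have "card (T - A) = card T - card (T \<inter> A)" by (metis Diff_Int2 card_Diff_subset_Int fT finite_Int)
    ultimately show ?thesis using cA T(2) by (simp add: Int_commute)
  qed
  have "sum d (A - T) \<le> sum d (T - A)"
  proof (cases "card (T - A) = 0")
    case True
    then have "T - A = {}" using fT by simp
    moreover have "A - T = {}" using True cc fA by simp
    ultimately show ?thesis by simp
  next
    case False
    have "real (card (T - A)) * sum d (A - T) \<le> real (card (A - T)) * sum d (T - A)"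
      by (rule double_sum_le) (use fA fT le in auto)
    then show ?thesis using cc False by simp
  qed
  moreover have "sum d A = sum d (A \<inter> T) + sum d (A - T)"
    by (metis Diff_Int2 fA inf.idem sum.Int_Diff)
  moreover have "sum d T = sum d (A \<inter> T) + sum d (T - A)"
    by (metis Int_commute fT sum.Int_Diff)
  ultimately show ?thesis unfolding A_def by linarith
qed

lemma prefix_avg:
  fixes d :: "'a \<Rightarrow> real"
  assumes dist: "distinct P" and srt: "sorted (map d P)" and kle: "k \<le> length P"
  shows "real (length P) * sum d (set (take k P)) \<le> real k * sum d (set P)"
proof -
  define A where "A = set (take k P)"
  define B where "B = set (drop k P)"
  have cA: "card A = k" unfolding A_def using dist kle by (simp add: distinct_card min_def)
  have cB: "card B = length P - k" unfolding B_def using dist by (simp add: distinct_card)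
  have setP: "set P = A \<union> B" unfolding A_def B_def by (metis append_take_drop_id set_append)
  have disj: "A \<inter> B = {}" unfolding A_def B_def
    using dist by (metis append_take_drop_id distinct_append)
  have "real (card B) * sum d A \<le> real (card A) * sum d B"
    by (rule double_sum_le) (use prefix_le[OF srt] in \<open>auto simp: A_def B_def\<close>)
  moreover have "sum d (set P) = sum d A + sum d B" using setP disj
    by (simp add: A_def B_def sum.union_disjoint)
  ultimately show ?thesis using cA cB kle unfolding A_def[symmetric]
    by (simp add: algebra_simps of_nat_diff)
qed



lemma score_eq:
  "krum_score n f X i = (\<Sum>j\<in>set (take (n-f-2) (sort_key (\<lambda>j. (norm (X i - X j))\<^sup>2) (filter (\<lambda>j. j\<noteq>i) [1..<n+1]))). (norm (X i - X j))\<^sup>2)"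
  unfolding krum_score_def sort_map_key take_map
  by (subst sum_list_distinct_conv_sum_set) auto

lemma set_filter_upt: "set (filter (\<lambda>j. j\<noteq>i) [1..<n+1]) = {1..n} - {i}"
  by auto

lemma score_le_subset:
  assumes "T \<subseteq> {1..n} - {i}" "n-f-2 \<le> card T"
  shows "krum_score n f X i \<le> (\<Sum>j\<in>T. (norm (X i - X j))\<^sup>2)"
proof -
  obtain T' where T': "T' \<subseteq> T" "card T' = n-f-2"
    using obtain_subset_with_card_n[OF assms(2)] by metis
  define P where "P = sort_key (\<lambda>j. (norm (X i - X j))\<^sup>2) (filter (\<lambda>j. j\<noteq>i) [1..<n+1])"
  have "krum_score n f X i \<le> (\<Sum>j\<in>T'. (norm (X i - X j))\<^sup>2)"
    unfolding score_eq P_def[symmetric]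
    by (rule prefix_min) (use T' assms in \<open>auto simp: P_def\<close>)
  also have "\<dots> \<le> (\<Sum>j\<in>T. (norm (X i - X j))\<^sup>2)"
    by (rule sum_mono2) (use T'(1) finite_subset[OF assms(1)] in auto)
  finally show ?thesis .
qed

lemma score_avg:
  assumes "U \<subseteq> {1..n} - {i}" "n-f-2 \<le> card U"
  shows "real (card U) * krum_score n f X i \<le> real (n-f-2) * (\<Sum>j\<in>U. (norm (X i - X j))\<^sup>2)"
proof -
  define d where "d = (\<lambda>j. (norm (X i - X j))\<^sup>2)"
  define P where "P = sort_key d (sorted_list_of_set U)"
  have fU: "finite U" using assms(1) finite_subset by blast
  have P: "distinct P" "set P = U" "length P = card U" "sorted (map d P)"
    using fU by (auto simp: P_def)
  have cT: "card (set (take (n-f-2) P)) = n-f-2"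
    using P assms(2) by (simp add: distinct_card min_def)
  have "krum_score n f X i \<le> sum d (set (take (n-f-2) P))"
  proof -
    have "set (take (n-f-2) P) \<subseteq> {1..n} - {i}" by (metis P(2) assms(1) order_trans set_take_subset)
    then show ?thesis unfolding d_def by (rule score_le_subset) (metis cT order_refl)
  qed
  then have "real (card U) * krum_score n f X i \<le> real (card U) * sum d (set (take (n-f-2) P))"
    by (rule mult_left_mono) simp
  also have "\<dots> = real (length P) * sum d (set (take (n-f-2) P))" by (simp only: P(3))
  also have "\<dots> \<le> real (n-f-2) * sum d (set P)"
    by (rule prefix_avg[OF P(1) P(4)]) (simp only: P(3) assms(2))
  also have "\<dots> = real (n-f-2) * (\<Sum>j\<in>U. (norm (X i - X j))\<^sup>2)" by (simp only: P(2) d_def)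
  finally show ?thesis .
qed

lemma score_witness:
  assumes "1 \<le> n"
  shows "\<exists>T. T \<subseteq> {1..n} - {i} \<and> card T = n-f-2 \<and> krum_score n f X i = (\<Sum>j\<in>T. (norm (X i - X j))\<^sup>2)"
proof -
  define P where "P = sort_key (\<lambda>j. (norm (X i - X j))\<^sup>2) (filter (\<lambda>j. j\<noteq>i) [1..<n+1])"
  have dP: "distinct P" "set P = {1..n} - {i}" by (auto simp: P_def)
  have "card ({1..n} - {i}) \<ge> n - 1"
    by (cases "i \<in> {1..n}") (auto simp: card_Diff_singleton_if)
  then have "length P \<ge> n-f-2" using dP distinct_card by fastforce
  then have "card (set (take (n-f-2) P)) = n-f-2" using dP by (simp add: distinct_card min_def)
  moreover have "set (take (n-f-2) P) \<subseteq> {1..n} - {i}" using dP by (metis set_take_subset)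
  ultimately show ?thesis unfolding score_eq P_def[symmetric] by blast
qed

lemma sel_props:
  shows "card (multi_krum_sel n f X) = n-f-2" "multi_krum_sel n f X \<subseteq> {1..n}"
    "\<And>i j. i \<in> multi_krum_sel n f X \<Longrightarrow> j \<in> {1..n} - multi_krum_sel n f X \<Longrightarrow>
       krum_score n f X i \<le> krum_score n f X j"
proof -
  define P where "P = sort_key (krum_score n f X) [1..<n+1]"
  have dP: "distinct P" "set P = {1..n}" "length P = n" "sorted (map (krum_score n f X) P)"
    by (auto simp: P_def)
  have S: "multi_krum_sel n f X = set (take (n-f-2) P)" unfolding multi_krum_sel_def P_def ..
  show "card (multi_krum_sel n f X) = n-f-2" unfolding S using dP by (simp add: distinct_card)
  show "multi_krum_sel n f X \<subseteq> {1..n}" unfolding S using dP by (metis set_take_subset)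
  fix i j assume i: "i \<in> multi_krum_sel n f X" and j: "j \<in> {1..n} - multi_krum_sel n f X"
  have "set P = set (take (n-f-2) P) \<union> set (drop (n-f-2) P)" by (metis append_take_drop_id set_append)
  then have "j \<in> set (drop (n-f-2) P)" using j dP S by auto
  then show "krum_score n f X i \<le> krum_score n f X j"
    using prefix_le[OF dP(4)] i S by blast
qed

lemma multi_krum_minus:
  assumes "0 < n-f-2"
  shows "multi_krum n f X - g = (1 / real (n-f-2)) *\<^sub>R (\<Sum>i\<in>multi_krum_sel n f X. (X i - g))"
proof -
  have fin: "finite (multi_krum_sel n f X)" by (rule finite_subset[OF sel_props(2)]) simp
  have "(\<Sum>i\<in>multi_krum_sel n f X. (X i - g)) = (\<Sum>i\<in>multi_krum_sel n f X. X i) - real (n-f-2) *\<^sub>R g"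
    using sum_constant_scaleR[of g "multi_krum_sel n f X"] by (simp only: sum_subtractf sel_props(1))
  then show ?thesis using assms unfolding multi_krum_def by (simp add: scaleR_diff_right)
qed



lemma sq_sum_le: "((a::real)+b)\<^sup>2 \<le> 2*a\<^sup>2+2*b\<^sup>2"
proof -
  have "2*a\<^sup>2+2*b\<^sup>2 - (a+b)\<^sup>2 = (a-b)\<^sup>2" by (simp add: power2_eq_square algebra_simps)
  moreover have "(a-b)\<^sup>2 \<ge> 0" by simp
  ultimately show ?thesis by linarith
qed

lemma prod_le_sq: "(a::real)*b \<le> (a\<^sup>2+b\<^sup>2)/2"
proof -
  have "(a\<^sup>2+b\<^sup>2) - 2*(a*b) = (a-b)\<^sup>2" by (simp add: power2_eq_square algebra_simps)
  moreover have "(a-b)\<^sup>2 \<ge> 0" by simp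
  ultimately show ?thesis by (simp add: field_simps)
qed

lemma norm_add_sq: "(norm (x + y))\<^sup>2 \<le> 2*(norm x)\<^sup>2 + 2*(norm (y::'a::real_normed_vector))\<^sup>2"
proof -
  have "norm (x+y) \<le> norm x + norm y" by (rule norm_triangle_ineq)
  then have "(norm (x+y))\<^sup>2 \<le> (norm x + norm y)\<^sup>2" by (simp add: power_mono)
  also have "\<dots> \<le> 2*(norm x)\<^sup>2 + 2*(norm y)\<^sup>2" by (rule sq_sum_le)
  finally show ?thesis .
qed

lemma sum_sq_le:
  fixes b :: "'i \<Rightarrow> real"
  assumes "finite A"
  shows "(sum b A)\<^sup>2 \<le> real (card A) * (\<Sum>i\<in>A. (b i)\<^sup>2)"
proof -
  have "(sum b A)\<^sup>2 = (\<Sum>i\<in>A. \<Sum>j\<in>A. b i * b j)" by (simp add: power2_eq_square sum_product)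
  also have "\<dots> \<le> (\<Sum>i\<in>A. \<Sum>j\<in>A. ((b i)\<^sup>2 + (b j)\<^sup>2)/2)"
    by (intro sum_mono) (rule prod_le_sq)
  also have "\<dots> = real (card A) * (\<Sum>i\<in>A. (b i)\<^sup>2)"
    by (simp add: sum.distrib sum_divide_distrib[symmetric] sum_distrib_left[symmetric] sum.swap[of _ A A] field_simps)
  finally show ?thesis .
qed

lemma score_nonneg: "0 \<le> krum_score n f X i"
  unfolding score_eq by (intro sum_nonneg) simp


lemma gar_sq_le:
  assumes m: "0 < n-f-2"
  shows "(norm (multi_krum n f X - g))\<^sup>2 \<le> (1/real (n-f-2)) * (\<Sum>i\<in>multi_krum_sel n f X. (norm (X i - g))\<^sup>2)"
proof -
  define Sel where "Sel = multi_krum_sel n f X"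
  have fin: "finite Sel" unfolding Sel_def by (rule finite_subset[OF sel_props(2)]) simp
  have cS: "card Sel = n-f-2" unfolding Sel_def by (rule sel_props(1))
  have "norm (multi_krum n f X - g) = (1/real (n-f-2)) * norm (\<Sum>i\<in>Sel. (X i - g))"
    unfolding multi_krum_minus[OF m] Sel_def by simp
  also have "\<dots> \<le> (1/real (n-f-2)) * (\<Sum>i\<in>Sel. norm (X i - g))"
    by (intro mult_left_mono norm_sum) simp
  finally have h: "norm (multi_krum n f X - g) \<le> (1/real (n-f-2)) * (\<Sum>i\<in>Sel. norm (X i - g))" .
  have "(norm (multi_krum n f X - g))\<^sup>2 \<le> ((1/real (n-f-2)) * (\<Sum>i\<in>Sel. norm (X i - g)))\<^sup>2"
    by (rule power_mono[OF h]) simp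
  also have "\<dots> = (1/real (n-f-2))\<^sup>2 * (\<Sum>i\<in>Sel. norm (X i - g))\<^sup>2" by (rule power_mult_distrib)
  also have "\<dots> \<le> (1/real (n-f-2))\<^sup>2 * (real (card Sel) * (\<Sum>i\<in>Sel. (norm (X i - g))\<^sup>2))"
    by (intro mult_left_mono sum_sq_le fin) simp
  also have "\<dots> = (1/real (n-f-2)) * (\<Sum>i\<in>Sel. (norm (X i - g))\<^sup>2)"
    using m by (simp add: cS power2_eq_square)
  finally show ?thesis unfolding Sel_def .
qed

lemma sum_scores_C:
  assumes nf: "2*f+2 < n" and C: "C \<subseteq> {1..n}" "card C = n - f"
  shows "(\<Sum>j\<in>C. krum_score n f X j) \<le> 4 * real (n-f-2) * (\<Sum>k\<in>C. (norm (X k - g))\<^sup>2)"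
proof -
  define a where "a = (\<lambda>k. (norm (X k - g))\<^sup>2)"
  define S where "S = (\<Sum>k\<in>C. a k)"
  have fC: "finite C" using C(1) finite_subset by (metis finite_atLeastAtMost)
  have aj: "a j \<le> S" if "j \<in> C" for j
    unfolding S_def by (rule member_le_sum) (use that fC in \<open>auto simp: a_def\<close>)
  have Sj: "(\<Sum>l\<in>C-{j}. a l) = S - a j" if "j \<in> C" for j
    unfolding S_def using that fC by (simp add: sum_diff1)
  have each: "real (n-f-1) * krum_score n f X j \<le> real (n-f-2) * (2*real (n-f-1) * a j + 2*(S - a j))"
    if j: "j \<in> C" for j
  proof -
    have cU: "card (C - {j}) = n-f-1" using j fC C(2) by simp
    have "real (card (C-{j})) * krum_score n f X j \<le> real (n-f-2) * (\<Sum>l\<in>C-{j}. (norm (X j - X l))\<^sup>2)"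
      by (rule score_avg) (use C(1) cU in auto)
    also have "\<dots> \<le> real (n-f-2) * (\<Sum>l\<in>C-{j}. 2*a j + 2*a l)"
    proof (intro mult_left_mono sum_mono)
      fix l
      have "X j - X l = (X j - g) + (-(X l - g))" by simp
      then show "(norm (X j - X l))\<^sup>2 \<le> 2*a j + 2*a l"
        unfolding a_def by (metis norm_add_sq norm_minus_cancel)
    qed simp
    also have "(\<Sum>l\<in>C-{j}. 2*a j + 2*a l) = 2*real (n-f-1) * a j + 2*(S - a j)"
      using Sj[OF j] cU by (simp add: sum.distrib sum_distrib_left[symmetric])
    finally show ?thesis using cU by simp
  qed
  have "real (n-f-1) * (\<Sum>j\<in>C. krum_score n f X j) \<le> (\<Sum>j\<in>C. real (n-f-2) * (2*real (n-f-1) * a j + 2*(S - a j)))"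
    unfolding sum_distrib_left by (intro sum_mono each)
  also have "\<dots> = real (n-f-2) * (2*real (n-f-1) * S + 2*(real (n-f) * S - S))"
    by (simp add: sum_distrib_left[symmetric] sum.distrib sum_subtractf S_def[symmetric] C(2) sum_distrib_left)
  also have "\<dots> = real (n-f-1) * (4 * real (n-f-2) * S)"
    using nf by (simp add: of_nat_diff algebra_simps)
  finally have "real (n-f-1) * (\<Sum>j\<in>C. krum_score n f X j) \<le> real (n-f-1) * (4 * real (n-f-2) * S)" .
  moreover have "real (n-f-1) > 0" using nf by simp
  ultimately show ?thesis unfolding S_def a_def by simp
qed



lemma det_bound:
  assumes nf: "2*f+2 < n" and C: "C \<subseteq> {1..n}" "card C = n - f"
  shows "(\<Sum>i\<in>multi_krum_sel n f X. (norm (X i - g))\<^sup>2)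
     \<le> (1 + (8*real f*real (n-f-2)/(real f+2) + 2*real f)/(real (n-f-2) - real f + 1)) * (\<Sum>k\<in>C. (norm (X k - g))\<^sup>2)"
proof -
  define m where "m = n-f-2"
  define a where "a = (\<lambda>k. (norm (X k - g))\<^sup>2)"
  define S where "S = (\<Sum>k\<in>C. a k)"
  define sc where "sc = krum_score n f X"
  define Sel where "Sel = multi_krum_sel n f X"
  define J where "J = {1..n} - C"
  define Bs where "Bs = Sel \<inter> J"
  define b where "b = card Bs"
  define U where "U = C - Sel"
  have fC: "finite C" using C(1) finite_subset by (metis finite_atLeastAtMost)
  have fSel: "finite Sel" unfolding Sel_def by (rule finite_subset[OF sel_props(2)]) simp
  have SelS: "Sel \<subseteq> {1..n}" unfolding Sel_def by (rule sel_props(2))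
  have cSel: "card Sel = m" unfolding Sel_def m_def by (rule sel_props(1))
  have cJ: "card J = f" unfolding J_def using C nf by (simp add: card_Diff_subset fC)
  have fJ: "finite J" unfolding J_def by simp
  have a0: "\<And>k. 0 \<le> a k" unfolding a_def by simp
  have S0: "0 \<le> S" unfolding S_def by (intro sum_nonneg a0)
  have sc0: "\<And>k. 0 \<le> sc k" unfolding sc_def by (rule score_nonneg)
  have Selsplit: "Sel = (Sel \<inter> C) \<union> Bs" "(Sel \<inter> C) \<inter> Bs = {}"
    using SelS unfolding Bs_def J_def by auto
  have fin1: "finite (Sel \<inter> C)" "finite Bs" using fSel by (auto simp: Bs_def)
  have sumsplit: "(\<Sum>i\<in>Sel. a i) = (\<Sum>i\<in>Sel \<inter> C. a i) + (\<Sum>i\<in>Bs. a i)"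
    using sum.union_disjoint[OF fin1 Selsplit(2), of a] Selsplit(1) by simp
  have partC: "(\<Sum>i\<in>Sel \<inter> C. a i) \<le> S"
    unfolding S_def by (rule sum_mono2) (use fC a0 in auto)
  have cardsplit: "card (Sel \<inter> C) + b = m"
    using card_Un_disjoint[OF fin1 Selsplit(2)] Selsplit(1) cSel unfolding b_def by simp
  have bf: "b \<le> f" unfolding b_def Bs_def using cJ card_mono[OF fJ, of "Sel \<inter> J"] by simp
  have mf: "f + 1 \<le> m" unfolding m_def using nf by simp
  have cU: "card U = b + 2"
  proof -
    have "card U = card C - card (Sel \<inter> C)" unfolding U_def
      using card_Diff_subset_Int[of C Sel] fC by (simp add: Int_commute)
    then show ?thesis using cardsplit C(2) nf unfolding m_def by simp
  qed
  have "real (card U) * sum sc Bs \<le> real (card Bs) * sum sc U"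
  proof (rule double_sum_le)
    show "finite Bs" unfolding Bs_def using fSel by simp
    show "finite U" unfolding U_def using fC by simp
    fix i j assume "i \<in> Bs" "j \<in> U"
    then show "sc i \<le> sc j" unfolding sc_def Bs_def U_def Sel_def
      using sel_props(3)[where n=n and f=f and X=X and i=i and j=j] C(1) by blast
  qed
  also have "\<dots> \<le> real b * sum sc C"
    unfolding b_def by (intro mult_left_mono sum_mono2) (use fC sc0 U_def in auto)
  also have "\<dots> \<le> real b * (4 * real m * S)"
    unfolding sc_def S_def a_def m_def by (intro mult_left_mono sum_scores_C nf C) simp
  finally have scB: "real (b+2) * sum sc Bs \<le> real b * (4 * real m * S)" using cU by simp
  define kap where "kap = real m - real f + 1"
  have kap: "kap \<ge> 2" unfolding kap_def using mf by simp
  have eachB: "kap * a i \<le> 2 * sc i + 2 * S" if i: "i \<in> Bs" for i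
  proof -
    have iJ: "i \<in> J" using i unfolding Bs_def by simp
    obtain T where T: "T \<subseteq> {1..n} - {i}" "card T = m" "sc i = (\<Sum>j\<in>T. (norm (X i - X j))\<^sup>2)"
      using score_witness[where n=n and f=f and X=X and i=i] nf unfolding sc_def m_def by auto
    have fT: "finite T" using T(1) finite_subset by (metis finite_Diff finite_atLeastAtMost)
    define K where "K = T \<inter> C"
    have "T - C \<subseteq> J - {i}" using T(1) unfolding J_def by auto
    then have "card (T - C) \<le> card (J - {i})" using fJ by (simp add: card_mono)
    also have "card (J - {i}) = f - 1" using iJ cJ fJ by simp
    finally have "card (T - C) \<le> f - 1" .
    moreover have "card T = card K + card (T - C)"
    proof -
      have "card (T - C) = card T - card (T \<inter> C)" using card_Diff_subset_Int[of T C] fT by simp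
      moreover have "card (T \<inter> C) \<le> card T" using card_mono[OF fT, of "T \<inter> C"] by simp
      ultimately show ?thesis unfolding K_def by simp
    qed
    moreover have "f \<ge> 1" using iJ cJ fJ by (metis card_0_eq empty_iff less_one not_le)
    ultimately have "m + 1 \<le> card K + f" using T(2) by linarith
    then have cK: "real (card K) \<ge> kap" unfolding kap_def by linarith
    have fK: "finite K" unfolding K_def using fT by simp
    have "real (card K) * a i = (\<Sum>k\<in>K. a i)" by simp
    also have "\<dots> \<le> (\<Sum>k\<in>K. 2*(norm (X i - X k))\<^sup>2 + 2*a k)"
    proof (rule sum_mono)
      fix k
      have "a i = (norm ((X i - X k) + (X k - g)))\<^sup>2" unfolding a_def by simp
      then show "a i \<le> 2*(norm (X i - X k))\<^sup>2 + 2*a k" unfolding a_def using norm_add_sq[of "X i - X k" "X k - g"] by simp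
    qed
    also have "\<dots> = 2*(\<Sum>k\<in>K. (norm (X i - X k))\<^sup>2) + 2*(\<Sum>k\<in>K. a k)"
      by (simp add: sum.distrib sum_distrib_left)
    also have "(\<Sum>k\<in>K. (norm (X i - X k))\<^sup>2) \<le> sc i"
      unfolding T(3) K_def by (rule sum_mono2) (use fT in auto)
    also have "(\<Sum>k\<in>K. a k) \<le> S"
      unfolding S_def K_def by (rule sum_mono2) (use fC a0 in auto)
    finally have "real (card K) * a i \<le> 2 * sc i + 2 * S" by simp
    moreover have "kap * a i \<le> real (card K) * a i" by (rule mult_right_mono[OF cK a0])
    ultimately show ?thesis by linarith
  qed
  have "kap * (\<Sum>i\<in>Bs. a i) \<le> (\<Sum>i\<in>Bs. 2 * sc i + 2 * S)"
    unfolding sum_distrib_left by (intro sum_mono eachB)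
  also have "\<dots> = 2 * sum sc Bs + 2 * real b * S"
    unfolding b_def by (simp add: sum.distrib sum_distrib_left)
  finally have aB: "kap * (\<Sum>i\<in>Bs. a i) \<le> 2 * sum sc Bs + 2 * real b * S" .
  have "sum sc Bs \<le> real b * (4 * real m * S) / real (b+2)"
    using scB by (simp add: field_simps)
  also have "\<dots> = (real b / (real b + 2)) * (4 * real m * S)" by simp
  also have "\<dots> \<le> (real f / (real f + 2)) * (4 * real m * S)"
  proof (rule mult_right_mono)
    show "real b / (real b + 2) \<le> real f / (real f + 2)" using bf by (simp add: field_simps)
  qed (use S0 in simp)
  finally have scB2: "sum sc Bs \<le> 4 * real f * real m * S / (real f + 2)" by (simp add: mult.assoc mult.left_commute)
  have bS: "real b * S \<le> real f * S" using bf S0 by (simp add: mult_right_mono)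
  have "kap * (\<Sum>i\<in>Bs. a i) \<le> 8 * real f * real m * S / (real f + 2) + 2 * real f * S"
    using aB scB2 bS by linarith
  then have h1: "(\<Sum>i\<in>Bs. a i) \<le> (8 * real f * real m * S / (real f + 2) + 2 * real f * S) / kap"
    using kap by (subst pos_le_divide_eq) (auto simp: mult.commute)
  have "(8 * real f * real m * S / (real f + 2) + 2 * real f * S) / kap
      = (8 * real f * real m / (real f + 2) + 2 * real f) / kap * S" by (simp add: field_simps)
  with h1 have "(\<Sum>i\<in>Bs. a i) \<le> (8 * real f * real m / (real f + 2) + 2 * real f) / kap * S" by simp
  then have "(\<Sum>i\<in>Sel. a i) \<le> S + (8 * real f * real m / (real f + 2) + 2 * real f) / kap * S"
    using sumsplit partC by simp
  then show ?thesis unfolding Sel_def a_def S_def kap_def m_def by (simp add: algebra_simps)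
qed



lemma poly_ineq:
  fixes f t :: real
  assumes f: "0 \<le> f" and t: "0 \<le> t"
  defines "m \<equiv> f + 1 + t" and "N \<equiv> f + 1 + t + 2" and "K \<equiv> (t + 2) * (f + 2)"
  shows "N * (K + 8*f*m + 2*f*(f+2)) \<le> 2*(N*m + f*m + f^2*(m+1)) * K"
proof -
  define P where "P = 12 + 34*t + 22*t*t + 4*t*t*t + 6*f + 23*f*t + 15*f*t*t + 2*f*t*t*t + 8*f*f + 27*f*f*t + 10*f*f*t*t + 14*f*f*f + 16*f*f*f*t + 2*f*f*f*t*t + 4*f*f*f*f + 2*f*f*f*f*t"
  have "2*(N*m + f*m + f^2*(m+1)) * K - N * (K + 8*f*m + 2*f*(f+2)) = P"
    unfolding P_def m_def N_def K_def by (simp add: algebra_simps power2_eq_square)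
  moreover have "0 \<le> P" unfolding P_def using f t by (intro add_nonneg_nonneg mult_nonneg_nonneg) simp_all
  ultimately show ?thesis by linarith
qed

lemma eta_sq:
  "(eta n f)\<^sup>2 = 2 * (real (n - f) + (real f * real (n-f-2) + (real f)\<^sup>2 * (real (n-f-2) + 1)) / real (n-f-2))"
  unfolding eta_def Let_def by (subst real_sqrt_pow2) (simp_all add: divide_nonneg_nonneg)

lemma num_ineq:
  assumes nf: "2*f+2 < n"
  shows "real (n-f) * ((1 + (8*real f*real (n-f-2)/(real f+2) + 2*real f)/(real (n-f-2) - real f + 1)) / real (n-f-2))
         \<le> (eta n f)\<^sup>2"
proof -
  define m where "m = real (n-f-2)"
  define t where "t = m - real f - 1"
  define F where "F = real f"
  have t0: "0 \<le> t" unfolding t_def m_def using nf by simp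
  have mt: "m = F + 1 + t" unfolding t_def F_def by simp
  have Nm0: "real (n-f) = m + 2" unfolding m_def using nf by (simp add: of_nat_diff)
  have Nm: "real (n-f) = F + 1 + t + 2" using Nm0 mt by simp
  have kap: "m - F + 1 = t + 2" using mt by simp
  have m0: "0 < m" using mt t0 unfolding F_def by simp
  define K where "K = (t + 2) * (F + 2)"
  have K0: "0 < K" unfolding K_def F_def using t0 by simp
  define A where "A = real (n-f) * (K + 8*F*m + 2*F*(F+2))"
  define Cc where "Cc = 2*(real (n-f)*m + F*m + F^2*(m+1))"
  have ineq: "A \<le> Cc * K" unfolding A_def Cc_def K_def Nm mt
    using poly_ineq[of F t] t0 unfolding F_def by simp
  have lhs: "real (n-f) * ((1 + (8*F*m/(F+2) + 2*F)/(m - F + 1)) / m) = (A / K) / m"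
  proof -
    have F0: "0 \<le> F" unfolding F_def by simp
    have "(1 + (8*F*m/(F+2) + 2*F)/(m - F + 1)) = (K + 8*F*m + 2*F*(F+2)) / K"
    proof -
      have nz: "F + 2 \<noteq> 0" "t + 2 \<noteq> 0" using t0 F0 by linarith+
      have "(8*F*m/(F+2) + 2*F)/(t + 2) = (8*F*m + 2*F*(F+2)) / ((t+2)*(F+2))"
        using nz by (simp add: field_simps)
      moreover have "1 + (8*F*m + 2*F*(F+2)) / ((t+2)*(F+2)) = ((t+2)*(F+2) + (8*F*m + 2*F*(F+2))) / ((t+2)*(F+2))"
        using nz by (simp add: add_divide_eq_iff)
      ultimately show ?thesis unfolding kap K_def by (simp add: add.assoc)
    qed
    then show ?thesis unfolding A_def by simp
  qed
  have rhs: "(eta n f)\<^sup>2 = Cc / m"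
    unfolding eta_sq Cc_def m_def[symmetric] F_def using m0 by (simp add: field_simps)
  have "A / K \<le> Cc" using ineq K0 by (simp add: pos_divide_le_eq)
  then have "(A / K) / m \<le> Cc / m" using m0 by (intro divide_right_mono) simp_all
  then show ?thesis using lhs rhs unfolding m_def F_def by simp
qed



lemma meas_cons: "h \<in> M \<rightarrow>\<^sub>M count_space UNIV \<Longrightarrow> (\<lambda>\<omega>. y # h \<omega>) \<in> M \<rightarrow>\<^sub>M count_space UNIV"
  by (rule measurable_compose[of h M "count_space UNIV" "\<lambda>l. y # l"]) auto

lemma meas_insort:
  fixes d :: "'i \<Rightarrow> 'w \<Rightarrow> real"
  assumes d: "\<And>j. d j \<in> borel_measurable M"
  shows "(\<lambda>\<omega>. insort_key (\<lambda>j. d j \<omega>) x l) \<in> M \<rightarrow>\<^sub>M count_space UNIV"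
proof (induction l)
  case Nil then show ?case by simp
next
  case (Cons y ys)
  have "(\<lambda>\<omega>. if d x \<omega> \<le> d y \<omega> then x # y # ys else y # insort_key (\<lambda>j. d j \<omega>) x ys) \<in> M \<rightarrow>\<^sub>M count_space UNIV"
  proof (rule measurable_If)
    show "{\<omega> \<in> space M. d x \<omega> \<le> d y \<omega>} \<in> sets M" using d by measurable
    show "(\<lambda>\<omega>. y # insort_key (\<lambda>j. d j \<omega>) x ys) \<in> M \<rightarrow>\<^sub>M count_space UNIV" by (rule meas_cons[OF Cons])
  qed simp
  then show ?case by simp
qed

lemma meas_sort_key:
  fixes d :: "'i::countable \<Rightarrow> 'w \<Rightarrow> real"
  assumes d: "\<And>j. d j \<in> borel_measurable M"
  shows "(\<lambda>\<omega>. sort_key (\<lambda>j. d j \<omega>) xs) \<in> M \<rightarrow>\<^sub>M count_space UNIV"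
proof (induction xs)
  case Nil then show ?case by simp
next
  case (Cons x xs)
  have "(\<lambda>\<omega>. (\<lambda>l \<omega>. insort_key (\<lambda>j. d j \<omega>) x l) (sort_key (\<lambda>j. d j \<omega>) xs) \<omega>) \<in> M \<rightarrow>\<^sub>M count_space UNIV"
    by (rule measurable_compose_countable[OF meas_insort[OF d] Cons])
  then show ?case by simp
qed

lemma meas_score:
  fixes X :: "nat \<Rightarrow> 'w \<Rightarrow> 'a::euclidean_space"
  assumes X: "\<And>k. X k \<in> borel_measurable M"
  shows "(\<lambda>\<omega>. krum_score n f (\<lambda>k. X k \<omega>) i) \<in> borel_measurable M"
proof -
  have ms: "(\<lambda>\<omega>. sort_key (\<lambda>j. (norm (X i \<omega> - X j \<omega>))\<^sup>2) (filter (\<lambda>j. j\<noteq>i) [1..<n+1])) \<in> M \<rightarrow>\<^sub>M count_space UNIV"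
    by (rule meas_sort_key) (use X in measurable)
  have "(\<lambda>\<omega>. (\<lambda>l \<omega>. \<Sum>j\<in>set (take (n-f-2) l). (norm (X i \<omega> - X j \<omega>))\<^sup>2)
      (sort_key (\<lambda>j. (norm (X i \<omega> - X j \<omega>))\<^sup>2) (filter (\<lambda>j. j\<noteq>i) [1..<n+1])) \<omega>) \<in> borel_measurable M"
    by (rule measurable_compose_countable[OF _ ms]) (use X in measurable)
  then show ?thesis unfolding score_eq by simp
qed

lemma meas_mk:
  fixes X :: "nat \<Rightarrow> 'w \<Rightarrow> 'a::euclidean_space"
  assumes X: "\<And>k. X k \<in> borel_measurable M"
  shows "(\<lambda>\<omega>. multi_krum n f (\<lambda>k. X k \<omega>)) \<in> borel_measurable M"
proof -
  have ms: "(\<lambda>\<omega>. sort_key (\<lambda>i. krum_score n f (\<lambda>k. X k \<omega>) i) [1..<n+1]) \<in> M \<rightarrow>\<^sub>M count_space UNIV"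
    by (rule meas_sort_key) (rule meas_score[OF X])
  have "(\<lambda>\<omega>. (\<lambda>l \<omega>. (1 / real (n - f - 2)) *\<^sub>R (\<Sum>i\<in>set (take (n-f-2) l). X i \<omega>))
      (sort_key (\<lambda>i. krum_score n f (\<lambda>k. X k \<omega>) i) [1..<n+1]) \<omega>) \<in> borel_measurable M"
    by (rule measurable_compose_countable[OF _ ms]) (use X in measurable)
  then show ?thesis unfolding multi_krum_def multi_krum_sel_def by simp
qed

lemma mk_cong:
  assumes "\<And>k. k \<in> {1..n} \<Longrightarrow> X k = Y k"
  shows "multi_krum n f X = multi_krum n f Y"
proof -
  have sc: "krum_score n f X i = krum_score n f Y i" if "i \<in> {1..n}" for i
  proof -
    have "map (\<lambda>j. (norm (X i - X j))\<^sup>2) (filter (\<lambda>j. j \<noteq> i) [1..<n+1])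
        = map (\<lambda>j. (norm (Y i - Y j))\<^sup>2) (filter (\<lambda>j. j \<noteq> i) [1..<n+1])"
    proof (intro map_cong refl)
      fix x assume "x \<in> set (filter (\<lambda>j. j \<noteq> i) [1..<n+1])"
      then have "x \<in> {1..n}" unfolding set_filter_upt by blast
      then show "(norm (X i - X x))\<^sup>2 = (norm (Y i - Y x))\<^sup>2" using assms that by simp
    qed
    then show ?thesis unfolding krum_score_def by (simp only:)
  qed
  have "sort_key (krum_score n f X) [1..<n+1] = sort_key (krum_score n f Y) [1..<n+1]"
    by (rule sort_key_cong') (use sc in auto)
  then have S: "multi_krum_sel n f X = multi_krum_sel n f Y" unfolding multi_krum_sel_def by simp
  have "(\<Sum>i\<in>multi_krum_sel n f X. X i) = (\<Sum>i\<in>multi_krum_sel n f Y. Y i)"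
    unfolding S using sel_props(2)[of n f Y] assms by (intro sum.cong) auto
  then show ?thesis unfolding multi_krum_def by simp
qed



lemma byz_idx:
  assumes J: "J \<subseteq> {1..n}" "card J = f" and k: "k \<in> {1..n}"
  shows "k \<in> J \<Longrightarrow> card {i\<in>J. i \<le> k} \<in> {1..f}"
    and "k \<notin> J \<Longrightarrow> card {i\<in>{1..n}-J. i \<le> k} \<in> {1..n-f}"
proof -
  have fJ: "finite J" using J(1) finite_subset by blast
  assume kJ: "k \<in> J"
  have "card {i\<in>J. i \<le> k} \<le> card J" using fJ by (intro card_mono) auto
  moreover have "0 < card {i\<in>J. i \<le> k}" using kJ fJ by (subst card_gt_0_iff) auto
  ultimately show "card {i\<in>J. i \<le> k} \<in> {1..f}" using J(2) by simp
next
  have fJ: "finite J" using J(1) finite_subset by blast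
  assume kJ: "k \<notin> J"
  have "card {i\<in>{1..n}-J. i \<le> k} \<le> card ({1..n}-J)" by (intro card_mono) auto
  also have "card ({1..n}-J) = n - f" using J fJ by (simp add: card_Diff_subset)
  finally have "card {i\<in>{1..n}-J. i \<le> k} \<le> n - f" .
  moreover have "0 < card {i\<in>{1..n}-J. i \<le> k}" using kJ k by (subst card_gt_0_iff) auto
  ultimately show "card {i\<in>{1..n}-J. i \<le> k} \<in> {1..n-f}" by simp
qed

definition Qc :: "nat \<Rightarrow> nat \<Rightarrow> real" where
  "Qc n f = (1 + (8*real f*real (n-f-2)/(real f+2) + 2*real f)/(real (n-f-2) - real f + 1)) / real (n-f-2)"

lemma Qc_nonneg: "2*f+2 < n \<Longrightarrow> 0 \<le> Qc n f"
  unfolding Qc_def by (intro divide_nonneg_nonneg add_nonneg_nonneg) auto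

lemma gar_bound:
  assumes nf: "2*f+2 < n" and C: "C \<subseteq> {1..n}" "card C = n - f"
  shows "(norm (multi_krum n f X - g))\<^sup>2 \<le> Qc n f * (\<Sum>k\<in>C. (norm (X k - g))\<^sup>2)"
proof -
  have m: "0 < n-f-2" using nf by simp
  have "(norm (multi_krum n f X - g))\<^sup>2 \<le> (1/real (n-f-2)) * (\<Sum>i\<in>multi_krum_sel n f X. (norm (X i - g))\<^sup>2)"
    by (rule gar_sq_le[OF m])
  also have "\<dots> \<le> (1/real (n-f-2)) * ((1 + (8*real f*real (n-f-2)/(real f+2) + 2*real f)/(real (n-f-2) - real f + 1)) * (\<Sum>k\<in>C. (norm (X k - g))\<^sup>2))"
    by (intro mult_left_mono det_bound[OF nf C]) simp
  also have "\<dots> = Qc n f * (\<Sum>k\<in>C. (norm (X k - g))\<^sup>2)" unfolding Qc_def by simp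
  finally show ?thesis .
qed

lemma Qc_eta: "2*f+2 < n \<Longrightarrow> real (n-f) * Qc n f \<le> (eta n f)\<^sup>2"
  unfolding Qc_def by (rule num_ineq)



lemma byz_meas:
  assumes J: "J \<subseteq> {1..n}" "card J = f"
    and V: "\<forall>i\<in>{1..n-f}. V i \<in> borel_measurable M"
    and B: "\<forall>i\<in>{1..f}. B i \<in> borel_measurable M"
  shows "(\<lambda>\<omega>. if k \<in> {1..n} then byz_inputs n J V B \<omega> k else 0) \<in> borel_measurable M"
proof (cases "k \<in> {1..n}")
  case True
  show ?thesis
  proof (cases "k \<in> J")
    case kJ: True
    then have "B (card {i\<in>J. i \<le> k}) \<in> borel_measurable M" using byz_idx(1)[OF J True] B by blast
    then show ?thesis using True kJ unfolding byz_inputs_def by simp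
  next
    case kJ: False
    then have "V (card {i\<in>{1..n}-J. i \<le> k}) \<in> borel_measurable M" using byz_idx(2)[OF J True] V by blast
    then show ?thesis using True kJ unfolding byz_inputs_def by simp
  qed
next
  case False
  then have "(\<lambda>\<omega>. if k \<in> {1..n} then byz_inputs n J V B \<omega> k else 0) = (\<lambda>\<omega>. 0)" by (simp only: if_False)
  then show ?thesis by simp
qed

lemma byz_C:
  assumes J: "J \<subseteq> {1..n}" "card J = f" and k: "k \<in> {1..n} - J"
  shows "\<exists>j\<in>{1..n-f}. \<forall>\<omega>. byz_inputs n J V B \<omega> k = V j \<omega>"
  using byz_idx(2)[OF J, of k] k unfolding byz_inputs_def by auto

lemma part1:
  fixes M :: "'w measure" and G :: "'a::euclidean_space measure"
  assumes nf: "2*f+2 < n" and PM: "prob_space M"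
    and V: "\<forall>i\<in>{1..n-f}. V i \<in> borel_measurable M \<and> distr M borel (V i) = G"
    and B: "\<forall>i\<in>{1..f}. B i \<in> borel_measurable M"
    and gdef: "g = (\<integral>x. x \<partial>G)"
    and iG2: "integrable G (\<lambda>x. (norm (x - g))\<^sup>2)"
    and vG: "(\<integral>x. (norm (x - g))\<^sup>2 \<partial>G) = real DIM('a) * \<sigma>\<^sup>2" and s0: "0 \<le> \<sigma>"
    and lt: "eta n f * sqrt (real DIM('a)) * \<sigma> < norm g"
    and sa: "sin \<alpha> = eta n f * sqrt (real DIM('a)) * \<sigma> / norm g"
    and J: "J \<subseteq> {1..n}" "card J = f"
  shows "(\<integral>\<omega>. multi_krum n f (byz_inputs n J V B \<omega>) \<partial>M) \<bullet> g \<ge> (1 - sin \<alpha>) * (norm g)\<^sup>2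
          \<and> (1 - sin \<alpha>) * (norm g)\<^sup>2 > 0"
proof -
  interpret prob_space M by (rule PM)
  define t where "t = eta n f * sqrt (real DIM('a)) * \<sigma>"
  have eta0: "0 \<le> eta n f" unfolding eta_def Let_def by simp
  have t0: "0 \<le> t" unfolding t_def using eta0 s0 by simp
  have g0: "0 < norm g" using lt t0 unfolding t_def by linarith
  define C where "C = {1..n} - J"
  have fJ: "finite J" using J(1) finite_subset by blast
  have C: "C \<subseteq> {1..n}" "card C = n - f" unfolding C_def using J fJ by (auto simp: card_Diff_subset)
  have fC: "finite C" unfolding C_def by simp
  define X' where "X' = (\<lambda>k \<omega>. if k \<in> {1..n} then byz_inputs n J V B \<omega> k else 0)"
  have X'm: "\<And>k. X' k \<in> borel_measurable M" unfolding X'_def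
    by (rule byz_meas[OF J]) (use V B in auto)
  define Y where "Y = (\<lambda>\<omega>. multi_krum n f (byz_inputs n J V B \<omega>))"
  have Yeq: "Y \<omega> = multi_krum n f (\<lambda>k. X' k \<omega>)" for \<omega>
    unfolding Y_def X'_def by (rule mk_cong) simp
  have Ym: "Y \<in> borel_measurable M" unfolding Yeq by (rule meas_mk[OF X'm])
  define a where "a = (\<lambda>k \<omega>. (norm (byz_inputs n J V B \<omega> k - g))\<^sup>2)"
  have ak: "integrable M (a k) \<and> (\<integral>\<omega>. a k \<omega> \<partial>M) = real DIM('a) * \<sigma>\<^sup>2" if k: "k \<in> C" for k
  proof -
    obtain j where j: "j \<in> {1..n-f}" "\<And>\<omega>. byz_inputs n J V B \<omega> k = V j \<omega>"
      using byz_C[OF J, of k V B] k unfolding C_def by blast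
    have Vj: "V j \<in> borel_measurable M" "distr M borel (V j) = G" using V j(1) by auto
    have ae: "a k = (\<lambda>\<omega>. (norm (V j \<omega> - g))\<^sup>2)" unfolding a_def using j(2) by simp
    have fm: "(\<lambda>x. (norm (x - g))\<^sup>2) \<in> borel_measurable (borel :: 'a measure)" by measurable
    have "integrable M (\<lambda>\<omega>. (norm (V j \<omega> - g))\<^sup>2)"
      using integrable_distr_eq[OF Vj(1) fm] iG2 Vj(2) by simp
    moreover have "(\<integral>\<omega>. (norm (V j \<omega> - g))\<^sup>2 \<partial>M) = real DIM('a) * \<sigma>\<^sup>2"
      using integral_distr[OF Vj(1) fm] vG Vj(2) by simp
    ultimately show ?thesis unfolding ae by simp
  qed
  define S where "S = (\<lambda>\<omega>. \<Sum>k\<in>C. a k \<omega>)"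
  have Si: "integrable M S" unfolding S_def using ak by (intro Bochner_Integration.integrable_sum) auto
  have Sint: "(\<integral>\<omega>. S \<omega> \<partial>M) = real (n-f) * (real DIM('a) * \<sigma>\<^sup>2)"
  proof -
    have "(\<integral>\<omega>. S \<omega> \<partial>M) = (\<Sum>k\<in>C. (\<integral>\<omega>. a k \<omega> \<partial>M))"
      unfolding S_def by (rule Bochner_Integration.integral_sum) (use ak in blast)
    also have "\<dots> = (\<Sum>k\<in>C. real DIM('a) * \<sigma>\<^sup>2)" by (rule sum.cong) (use ak in auto)
    finally show ?thesis using C(2) by simp
  qed
  define Z where "Z = (\<lambda>\<omega>. norm (Y \<omega> - g))"
  have Zm: "Z \<in> borel_measurable M" unfolding Z_def using Ym by measurable
  have Zb: "(Z \<omega>)\<^sup>2 \<le> Qc n f * S \<omega>" for \<omega>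
    unfolding Z_def Y_def S_def a_def by (rule gar_bound[OF nf C])
  have Z2i: "integrable M (\<lambda>\<omega>. (Z \<omega>)\<^sup>2)"
  proof (rule Bochner_Integration.integrable_bound)
    show "integrable M (\<lambda>\<omega>. Qc n f * S \<omega>)" using Si by simp
    show "(\<lambda>\<omega>. (Z \<omega>)\<^sup>2) \<in> borel_measurable M" using Zm by measurable
    show "AE \<omega> in M. norm ((Z \<omega>)\<^sup>2) \<le> norm (Qc n f * S \<omega>)"
      using Zb by (intro AE_I2) (smt (verit) real_norm_def zero_le_power2)
  qed
  have Zi: "integrable M Z"
  proof (rule Bochner_Integration.integrable_bound)
    show "integrable M (\<lambda>\<omega>. 1 + (Z \<omega>)\<^sup>2)" using Z2i by simp
    show "Z \<in> borel_measurable M" by (rule Zm)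
    show "AE \<omega> in M. norm (Z \<omega>) \<le> norm (1 + (Z \<omega>)\<^sup>2)"
    proof (intro AE_I2)
      fix \<omega>
      have "Z \<omega> \<le> 1 + (Z \<omega>)\<^sup>2" by (smt (verit) power2_eq_square mult_le_cancel_left1 zero_le_power2)
      then show "norm (Z \<omega>) \<le> norm (1 + (Z \<omega>)\<^sup>2)" unfolding Z_def by simp
    qed
  qed
  have EZ2: "(\<integral>\<omega>. (Z \<omega>)\<^sup>2 \<partial>M) \<le> t\<^sup>2"
  proof -
    have "(\<integral>\<omega>. (Z \<omega>)\<^sup>2 \<partial>M) \<le> (\<integral>\<omega>. Qc n f * S \<omega> \<partial>M)"
      by (rule integral_mono[OF Z2i _ Zb]) (use Si in simp)
    also have "\<dots> = Qc n f * (real (n-f) * (real DIM('a) * \<sigma>\<^sup>2))" using Sint by simp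
    also have "\<dots> = (real (n-f) * Qc n f) * (real DIM('a) * \<sigma>\<^sup>2)" by simp
    also have "\<dots> \<le> (eta n f)\<^sup>2 * (real DIM('a) * \<sigma>\<^sup>2)"
      by (intro mult_right_mono Qc_eta[OF nf]) simp
    also have "\<dots> = t\<^sup>2" unfolding t_def by (simp add: power_mult_distrib)
    finally show ?thesis .
  qed
  have EZ: "(\<integral>\<omega>. Z \<omega> \<partial>M) \<le> t"
  proof -
    have "0 \<le> variance Z" by (rule variance_positive)
    then have "(expectation Z)\<^sup>2 \<le> expectation (\<lambda>\<omega>. (Z \<omega>)\<^sup>2)"
      using variance_eq[OF Zi Z2i] by simp
    then have "(expectation Z)\<^sup>2 \<le> t\<^sup>2" using EZ2 by simp
    then show ?thesis using t0 by (rule power2_le_imp_le)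
  qed
  have Yi: "integrable M Y"
  proof (rule Bochner_Integration.integrable_bound)
    show "integrable M (\<lambda>\<omega>. norm g + Z \<omega>)" using Zi by simp
    show "Y \<in> borel_measurable M" by (rule Ym)
    show "AE \<omega> in M. norm (Y \<omega>) \<le> norm (norm g + Z \<omega>)"
    proof (intro AE_I2)
      fix \<omega>
      have "norm (Y \<omega>) \<le> norm g + Z \<omega>" unfolding Z_def by (metis add.commute diff_add_cancel norm_triangle_ineq)
      also have "\<dots> \<le> norm (norm g + Z \<omega>)" by simp
      finally show "norm (Y \<omega>) \<le> norm (norm g + Z \<omega>)" .
    qed
  qed
  have pw: "(norm g)\<^sup>2 - norm g * Z \<omega> \<le> Y \<omega> \<bullet> g" for \<omega>
  proof -
    have "Y \<omega> \<bullet> g = g \<bullet> g + (Y \<omega> - g) \<bullet> g" by (simp add: inner_diff_left)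
    moreover have "- ((Y \<omega> - g) \<bullet> g) \<le> norm (Y \<omega> - g) * norm g"
      using norm_cauchy_schwarz[of "g - Y \<omega>" g] by (simp add: inner_diff_left norm_minus_commute)
    moreover have "g \<bullet> g = (norm g)\<^sup>2" by (simp add: power2_norm_eq_inner)
    ultimately show ?thesis unfolding Z_def by (simp add: mult.commute)
  qed
  have "(\<integral>\<omega>. Y \<omega> \<partial>M) \<bullet> g = (\<integral>\<omega>. Y \<omega> \<bullet> g \<partial>M)" using Yi by simp
  also have "\<dots> \<ge> (\<integral>\<omega>. (norm g)\<^sup>2 - norm g * Z \<omega> \<partial>M)"
    by (rule integral_mono) (use Yi Zi pw in auto)
  finally have "(\<integral>\<omega>. Y \<omega> \<partial>M) \<bullet> g \<ge> (norm g)\<^sup>2 - norm g * (\<integral>\<omega>. Z \<omega> \<partial>M)"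
    using Zi by (simp add: prob_space)
  moreover have "norm g * (\<integral>\<omega>. Z \<omega> \<partial>M) \<le> norm g * t" using EZ g0 by simp
  moreover have "(1 - sin \<alpha>) * (norm g)\<^sup>2 = (norm g)\<^sup>2 - norm g * t"
    unfolding sa t_def[symmetric] using g0 by (simp add: field_simps power2_eq_square)
  moreover have "(norm g)\<^sup>2 - norm g * t > 0"
  proof -
    have "norm g * t < norm g * norm g" using lt g0 unfolding t_def by simp
    then show ?thesis by (simp add: power2_eq_square)
  qed
  ultimately show ?thesis unfolding Y_def by linarith
qed



lemma pow_bound:
  assumes nf: "2*f+2 < n" and C: "C \<subseteq> {1..n}" "card C = n - f"
  shows "(norm (multi_krum n f X))^r \<le> (sqrt (Qc n f * real (n-f)))^r * (\<Sum>k\<in>C. (norm (X k))^r)"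
proof -
  have fC: "finite C" using C(1) finite_subset by blast
  have Cne: "C \<noteq> {}" using C(2) nf by auto
  define Mx where "Mx = Max ((\<lambda>k. norm (X k)) ` C)"
  obtain k0 where k0: "k0 \<in> C" "Mx = norm (X k0)"
  proof -
    have "Mx \<in> (\<lambda>k. norm (X k)) ` C" unfolding Mx_def using fC Cne by (intro Max_in) auto
    then show ?thesis using that by auto
  qed
  have le: "norm (X k) \<le> Mx" if "k \<in> C" for k unfolding Mx_def using fC that by (intro Max_ge) auto
  have Q0: "0 \<le> Qc n f" by (rule Qc_nonneg[OF nf])
  have "(norm (multi_krum n f X))\<^sup>2 \<le> Qc n f * (\<Sum>k\<in>C. (norm (X k))\<^sup>2)"
    using gar_bound[OF nf C, of X 0] by simp
  also have "\<dots> \<le> Qc n f * (\<Sum>k\<in>C. Mx\<^sup>2)"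
    by (intro mult_left_mono sum_mono power_mono le Q0) auto
  also have "\<dots> = (Qc n f * real (n-f)) * Mx\<^sup>2" using C(2) by simp
  also have "\<dots> = (sqrt (Qc n f * real (n-f)) * Mx)\<^sup>2"
    using Q0 by (simp add: power_mult_distrib)
  finally have "norm (multi_krum n f X) \<le> sqrt (Qc n f * real (n-f)) * Mx"
    by (rule power2_le_imp_le) (use k0 Q0 in simp)
  then have "(norm (multi_krum n f X))^r \<le> (sqrt (Qc n f * real (n-f)) * Mx)^r"
    by (rule power_mono) simp
  also have "\<dots> = (sqrt (Qc n f * real (n-f)))^r * (norm (X k0))^r" by (simp add: power_mult_distrib k0)
  also have "\<dots> \<le> (sqrt (Qc n f * real (n-f)))^r * (\<Sum>k\<in>C. (norm (X k))^r)"
    by (intro mult_left_mono member_le_sum k0 fC) (auto simp: Q0 nf)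
  finally show ?thesis .
qed

lemma moment_exps_finite: "finite (moment_exps k r)"
proof -
  define F where "F = (\<lambda>h::nat\<Rightarrow>nat. \<lambda>i. if i < k then h i else 0)"
  have "moment_exps k r \<subseteq> F ` (PiE {..<k} (\<lambda>_. {..r}))"
  proof
    fix rs assume rs: "rs \<in> moment_exps k r"
    then have z: "\<forall>i\<ge>k. rs i = 0" and s: "(\<Sum>i<k. rs i) = r" unfolding moment_exps_def by auto
    have "rs = F (restrict rs {..<k})" unfolding F_def using z by (auto simp: fun_eq_iff)
    moreover have "restrict rs {..<k} \<in> PiE {..<k} (\<lambda>_. {..r})"
    proof -
      have "rs i \<le> r" if "i < k" for i using s that by (metis finite_lessThan lessThan_iff member_le_sum zero_le)
      then show ?thesis by auto
    qed
    ultimately show "rs \<in> F ` (PiE {..<k} (\<lambda>_. {..r}))" by blast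
  qed
  moreover have "finite (F ` (PiE {..<k} (\<lambda>_. {..r})))" by (intro finite_imageI finite_PiE) auto
  ultimately show ?thesis by (rule finite_subset)
qed

lemma moment_sum:
  fixes G :: "'a::real_normed_vector measure" and r :: nat
  assumes n: "2 \<le> n" and PG: "prob_space G" and K0: "0 \<le> K"
  defines "e \<equiv> (\<lambda>i::nat. if i = 0 then r else 0)"
  shows "(\<Sum>rs\<in>moment_exps (n - 1) r. ennreal (if rs = e then K else 0) * (\<Prod>i<n - 1. \<integral>\<^sup>+x. ennreal ((norm x) ^ rs i) \<partial>G))
       = ennreal K * (\<integral>\<^sup>+x. ennreal ((norm x) ^ r) \<partial>G)"
proof -
  have eM: "e \<in> moment_exps (n-1) r" unfolding moment_exps_def e_def using n by auto
  have "(\<Sum>rs\<in>moment_exps (n - 1) r. ennreal (if rs = e then K else 0) * (\<Prod>i<n - 1. \<integral>\<^sup>+x. ennreal ((norm x) ^ rs i) \<partial>G))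
      = ennreal K * (\<Prod>i<n - 1. \<integral>\<^sup>+x. ennreal ((norm x) ^ e i) \<partial>G)"
    by (subst sum.remove[OF moment_exps_finite eM]) (auto intro!: sum.neutral)
  also have "(\<Prod>i<n - 1. \<integral>\<^sup>+x. ennreal ((norm x) ^ e i) \<partial>G) = (\<integral>\<^sup>+x. ennreal ((norm x) ^ r) \<partial>G)"
  proof -
    have z: "0 \<in> {..<n-1}" using n by simp
    have "(\<Prod>i<n - 1. \<integral>\<^sup>+x. ennreal ((norm x) ^ e i) \<partial>G)
        = (\<integral>\<^sup>+x. ennreal ((norm x) ^ e 0) \<partial>G) * (\<Prod>i\<in>{..<n-1}-{0}. \<integral>\<^sup>+x. ennreal ((norm x) ^ e i) \<partial>G)"
      by (rule prod.remove[OF _ z]) simp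
    also have "(\<Prod>i\<in>{..<n-1}-{0}. \<integral>\<^sup>+x. ennreal ((norm x) ^ e i) \<partial>G) = 1"
    proof (rule prod.neutral, intro ballI)
      fix i assume "i \<in> {..<n-1}-{0}"
      then have "e i = 0" unfolding e_def by simp
      then show "(\<integral>\<^sup>+x. ennreal ((norm x) ^ e i) \<partial>G) = 1"
        using prob_space.emeasure_space_1[OF PG] by simp
    qed
    finally show ?thesis unfolding e_def by simp
  qed
  finally show ?thesis .
qed



lemma part2:
  fixes M :: "'w measure" and G :: "'a::euclidean_space measure" and r :: nat
  assumes nf: "2*f+2 < n" and PM: "prob_space M"
    and V: "\<forall>i\<in>{1..n-f}. V i \<in> borel_measurable M \<and> distr M borel (V i) = G"
    and J: "J \<subseteq> {1..n}" "card J = f"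
  shows "(\<integral>\<^sup>+\<omega>. ennreal ((norm (multi_krum n f (byz_inputs n J V B \<omega>))) ^ r) \<partial>M)
     \<le> ennreal (real (n-f) * (sqrt (Qc n f * real (n-f)))^r) * (\<integral>\<^sup>+x. ennreal ((norm x) ^ r) \<partial>G)"
proof -
  define Kc where "Kc = (sqrt (Qc n f * real (n-f)))^r"
  have Q0: "0 \<le> Qc n f" by (rule Qc_nonneg[OF nf])
  have K0: "0 \<le> Kc" unfolding Kc_def using Q0 by simp
  define C where "C = {1..n} - J"
  have fJ: "finite J" using J(1) finite_subset by blast
  have C: "C \<subseteq> {1..n}" "card C = n - f" unfolding C_def using J fJ by (auto simp: card_Diff_subset)
  have fC: "finite C" unfolding C_def by simp
  define I where "I = (\<integral>\<^sup>+x. ennreal ((norm x) ^ r) \<partial>G)"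
  have each: "(\<integral>\<^sup>+\<omega>. ennreal (Kc * (norm (byz_inputs n J V B \<omega> k))^r) \<partial>M) = ennreal Kc * I"
    and meas: "(\<lambda>\<omega>. ennreal (Kc * (norm (byz_inputs n J V B \<omega> k))^r)) \<in> borel_measurable M"
    if k: "k \<in> C" for k
  proof -
    obtain j where j: "j \<in> {1..n-f}" "\<And>\<omega>. byz_inputs n J V B \<omega> k = V j \<omega>"
      using byz_C[OF J, of k V B] k unfolding C_def by blast
    have Vj: "V j \<in> borel_measurable M" "distr M borel (V j) = G" using V j(1) by auto
    show "(\<lambda>\<omega>. ennreal (Kc * (norm (byz_inputs n J V B \<omega> k))^r)) \<in> borel_measurable M"
      unfolding j(2) using Vj(1) by measurable
    have "(\<integral>\<^sup>+\<omega>. ennreal (Kc * (norm (byz_inputs n J V B \<omega> k))^r) \<partial>M)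
        = (\<integral>\<^sup>+\<omega>. ennreal Kc * ennreal ((norm (V j \<omega>))^r) \<partial>M)"
      unfolding j(2) using K0 by (simp add: ennreal_mult)
    also have "\<dots> = ennreal Kc * (\<integral>\<^sup>+\<omega>. ennreal ((norm (V j \<omega>))^r) \<partial>M)"
      by (rule nn_integral_cmult) (use Vj(1) in measurable)
    also have "(\<integral>\<^sup>+\<omega>. ennreal ((norm (V j \<omega>))^r) \<partial>M) = I"
      unfolding I_def Vj(2)[symmetric] by (subst nn_integral_distr[OF Vj(1)]) (simp_all)
    finally show "(\<integral>\<^sup>+\<omega>. ennreal (Kc * (norm (byz_inputs n J V B \<omega> k))^r) \<partial>M) = ennreal Kc * I" .
  qed
  have "(\<integral>\<^sup>+\<omega>. ennreal ((norm (multi_krum n f (byz_inputs n J V B \<omega>))) ^ r) \<partial>M)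
      \<le> (\<integral>\<^sup>+\<omega>. (\<Sum>k\<in>C. ennreal (Kc * (norm (byz_inputs n J V B \<omega> k))^r)) \<partial>M)"
  proof (rule nn_integral_mono)
    fix \<omega>
    have "(norm (multi_krum n f (byz_inputs n J V B \<omega>))) ^ r \<le> Kc * (\<Sum>k\<in>C. (norm (byz_inputs n J V B \<omega> k))^r)"
      unfolding Kc_def by (rule pow_bound[OF nf C])
    also have "\<dots> = (\<Sum>k\<in>C. Kc * (norm (byz_inputs n J V B \<omega> k))^r)" by (simp add: sum_distrib_left)
    finally have "ennreal ((norm (multi_krum n f (byz_inputs n J V B \<omega>))) ^ r) \<le> ennreal (\<Sum>k\<in>C. Kc * (norm (byz_inputs n J V B \<omega> k))^r)"
      by (rule ennreal_leI)
    also have "\<dots> = (\<Sum>k\<in>C. ennreal (Kc * (norm (byz_inputs n J V B \<omega> k))^r))"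
      by (rule sum_ennreal[symmetric]) (use K0 in simp)
    finally show "ennreal ((norm (multi_krum n f (byz_inputs n J V B \<omega>))) ^ r) \<le> (\<Sum>k\<in>C. ennreal (Kc * (norm (byz_inputs n J V B \<omega> k))^r))" .
  qed
  also have "\<dots> = (\<Sum>k\<in>C. (\<integral>\<^sup>+\<omega>. ennreal (Kc * (norm (byz_inputs n J V B \<omega> k))^r) \<partial>M))"
    by (rule nn_integral_sum) (rule meas)
  also have "\<dots> = (\<Sum>k\<in>C. ennreal Kc * I)" by (rule sum.cong) (simp_all add: each)
  also have "\<dots> = ennreal (real (n-f) * Kc) * I"
    using C(2) K0 by (simp add: ennreal_mult ennreal_of_nat_eq_real_of_nat mult.assoc)
  finally show ?thesis unfolding Kc_def I_def .
qed


theorem lemma1: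
  fixes n f :: nat
  assumes "2 * f + 2 < n"
  shows
  "(\<forall>(M :: 'w measure) (G :: 'a::euclidean_space measure) (V :: nat \<Rightarrow> 'w \<Rightarrow> 'a)
      (B :: nat \<Rightarrow> 'w \<Rightarrow> 'a) (g :: 'a) (\<sigma> :: real) (\<alpha> :: real) (J :: nat set).
      prob_space M \<and>
      (\<forall>i\<in>{1..n-f}. V i \<in> borel_measurable M \<and> distr M borel (V i) = G) \<and>
      prob_space.indep_vars M (\<lambda>_. borel) V {1..n-f} \<and>
      (\<forall>i\<in>{1..f}. B i \<in> borel_measurable M) \<and>
      integrable G (\<lambda>x. x) \<and> g = (\<integral>x. x \<partial>G) \<and>
      integrable G (\<lambda>x. (norm (x - g))\<^sup>2) \<and>
      (\<integral>x. (norm (x - g))\<^sup>2 \<partial>G) = real DIM('a) * \<sigma>\<^sup>2 \<and> 0 \<le> \<sigma> \<and>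
      eta n f * sqrt (real DIM('a)) * \<sigma> < norm g \<and>
      0 \<le> \<alpha> \<and> \<alpha> < pi / 2 \<and> sin \<alpha> = eta n f * sqrt (real DIM('a)) * \<sigma> / norm g \<and>
      J \<subseteq> {1..n} \<and> card J = f
      \<longrightarrow> (\<integral>\<omega>. multi_krum n f (byz_inputs n J V B \<omega>) \<partial>M) \<bullet> g \<ge> (1 - sin \<alpha>) * (norm g)\<^sup>2
          \<and> (1 - sin \<alpha>) * (norm g)\<^sup>2 > 0)
   \<and>
   (\<forall>r\<in>{2,3,4::nat}. \<exists>c :: (nat \<Rightarrow> nat) \<Rightarrow> real. (\<forall>rs. c rs \<ge> 0) \<and>
     (\<forall>(M :: 'w measure) (G :: 'a measure) (V :: nat \<Rightarrow> 'w \<Rightarrow> 'a)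
      (B :: nat \<Rightarrow> 'w \<Rightarrow> 'a) (g :: 'a) (\<sigma> :: real) (\<alpha> :: real) (J :: nat set).
      prob_space M \<and>
      (\<forall>i\<in>{1..n-f}. V i \<in> borel_measurable M \<and> distr M borel (V i) = G) \<and>
      prob_space.indep_vars M (\<lambda>_. borel) V {1..n-f} \<and>
      (\<forall>i\<in>{1..f}. B i \<in> borel_measurable M) \<and>
      integrable G (\<lambda>x. x) \<and> g = (\<integral>x. x \<partial>G) \<and>
      integrable G (\<lambda>x. (norm (x - g))\<^sup>2) \<and>
      (\<integral>x. (norm (x - g))\<^sup>2 \<partial>G) = real DIM('a) * \<sigma>\<^sup>2 \<and> 0 \<le> \<sigma> \<and>
      eta n f * sqrt (real DIM('a)) * \<sigma> < norm g \<and>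
      0 \<le> \<alpha> \<and> \<alpha> < pi / 2 \<and> sin \<alpha> = eta n f * sqrt (real DIM('a)) * \<sigma> / norm g \<and>
      J \<subseteq> {1..n} \<and> card J = f
      \<longrightarrow> (\<integral>\<^sup>+\<omega>. ennreal ((norm (multi_krum n f (byz_inputs n J V B \<omega>))) ^ r) \<partial>M)
          \<le> (\<Sum>rs\<in>moment_exps (n - 1) r.
                ennreal (c rs) * (\<Prod>i<n - 1. \<integral>\<^sup>+x. ennreal ((norm x) ^ rs i) \<partial>G))))"
  proof (rule conjI)
  show "\<forall>(M :: 'w measure) (G :: 'a::euclidean_space measure) (V :: nat \<Rightarrow> 'w \<Rightarrow> 'a)
      (B :: nat \<Rightarrow> 'w \<Rightarrow> 'a) (g :: 'a) (\<sigma> :: real) (\<alpha> :: real) (J :: nat set).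
      prob_space M \<and>
      (\<forall>i\<in>{1..n-f}. V i \<in> borel_measurable M \<and> distr M borel (V i) = G) \<and>
      prob_space.indep_vars M (\<lambda>_. borel) V {1..n-f} \<and>
      (\<forall>i\<in>{1..f}. B i \<in> borel_measurable M) \<and>
      integrable G (\<lambda>x. x) \<and> g = (\<integral>x. x \<partial>G) \<and>
      integrable G (\<lambda>x. (norm (x - g))\<^sup>2) \<and>
      (\<integral>x. (norm (x - g))\<^sup>2 \<partial>G) = real DIM('a) * \<sigma>\<^sup>2 \<and> 0 \<le> \<sigma> \<and>
      eta n f * sqrt (real DIM('a)) * \<sigma> < norm g \<and>
      0 \<le> \<alpha> \<and> \<alpha> < pi / 2 \<and> sin \<alpha> = eta n f * sqrt (real DIM('a)) * \<sigma> / norm g \<and>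
      J \<subseteq> {1..n} \<and> card J = f
      \<longrightarrow> (\<integral>\<omega>. multi_krum n f (byz_inputs n J V B \<omega>) \<partial>M) \<bullet> g \<ge> (1 - sin \<alpha>) * (norm g)\<^sup>2
          \<and> (1 - sin \<alpha>) * (norm g)\<^sup>2 > 0"
  proof (intro allI impI)
    fix M :: "'w measure" and G :: "'a measure" and V B :: "nat \<Rightarrow> 'w \<Rightarrow> 'a" and g :: 'a
      and \<sigma> \<alpha> :: real and J :: "nat set"
    assume H: "prob_space M \<and>
      (\<forall>i\<in>{1..n-f}. V i \<in> borel_measurable M \<and> distr M borel (V i) = G) \<and>
      prob_space.indep_vars M (\<lambda>_. borel) V {1..n-f} \<and>
      (\<forall>i\<in>{1..f}. B i \<in> borel_measurable M) \<and>
      integrable G (\<lambda>x. x) \<and> g = (\<integral>x. x \<partial>G) \<and>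
      integrable G (\<lambda>x. (norm (x - g))\<^sup>2) \<and>
      (\<integral>x. (norm (x - g))\<^sup>2 \<partial>G) = real DIM('a) * \<sigma>\<^sup>2 \<and> 0 \<le> \<sigma> \<and>
      eta n f * sqrt (real DIM('a)) * \<sigma> < norm g \<and>
      0 \<le> \<alpha> \<and> \<alpha> < pi / 2 \<and> sin \<alpha> = eta n f * sqrt (real DIM('a)) * \<sigma> / norm g \<and>
      J \<subseteq> {1..n} \<and> card J = f"
    show "(\<integral>\<omega>. multi_krum n f (byz_inputs n J V B \<omega>) \<partial>M) \<bullet> g \<ge> (1 - sin \<alpha>) * (norm g)\<^sup>2
          \<and> (1 - sin \<alpha>) * (norm g)\<^sup>2 > 0"
      by (rule part1[OF assms]) (use H in auto)
  qed
next
  show "\<forall>r\<in>{2,3,4::nat}. \<exists>c :: (nat \<Rightarrow> nat) \<Rightarrow> real. (\<forall>rs. c rs \<ge> 0) \<and>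
     (\<forall>(M :: 'w measure) (G :: 'a measure) (V :: nat \<Rightarrow> 'w \<Rightarrow> 'a)
      (B :: nat \<Rightarrow> 'w \<Rightarrow> 'a) (g :: 'a) (\<sigma> :: real) (\<alpha> :: real) (J :: nat set).
      prob_space M \<and>
      (\<forall>i\<in>{1..n-f}. V i \<in> borel_measurable M \<and> distr M borel (V i) = G) \<and>
      prob_space.indep_vars M (\<lambda>_. borel) V {1..n-f} \<and>
      (\<forall>i\<in>{1..f}. B i \<in> borel_measurable M) \<and>
      integrable G (\<lambda>x. x) \<and> g = (\<integral>x. x \<partial>G) \<and>
      integrable G (\<lambda>x. (norm (x - g))\<^sup>2) \<and>
      (\<integral>x. (norm (x - g))\<^sup>2 \<partial>G) = real DIM('a) * \<sigma>\<^sup>2 \<and> 0 \<le> \<sigma> \<and>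
      eta n f * sqrt (real DIM('a)) * \<sigma> < norm g \<and>
      0 \<le> \<alpha> \<and> \<alpha> < pi / 2 \<and> sin \<alpha> = eta n f * sqrt (real DIM('a)) * \<sigma> / norm g \<and>
      J \<subseteq> {1..n} \<and> card J = f
      \<longrightarrow> (\<integral>\<^sup>+\<omega>. ennreal ((norm (multi_krum n f (byz_inputs n J V B \<omega>))) ^ r) \<partial>M)
          \<le> (\<Sum>rs\<in>moment_exps (n - 1) r.
                ennreal (c rs) * (\<Prod>i<n - 1. \<integral>\<^sup>+x. ennreal ((norm x) ^ rs i) \<partial>G)))"
  proof (intro ballI)
    fix r :: nat
    define Kr where "Kr = real (n-f) * (sqrt (Qc n f * real (n-f)))^r"
    have Kr0: "0 \<le> Kr" unfolding Kr_def using Qc_nonneg[OF assms] by simp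
    define c where "c = (\<lambda>rs::nat\<Rightarrow>nat. if rs = (\<lambda>i. if i = 0 then r else 0) then Kr else 0)"
    show "\<exists>c :: (nat \<Rightarrow> nat) \<Rightarrow> real. (\<forall>rs. c rs \<ge> 0) \<and>
     (\<forall>(M :: 'w measure) (G :: 'a measure) (V :: nat \<Rightarrow> 'w \<Rightarrow> 'a)
      (B :: nat \<Rightarrow> 'w \<Rightarrow> 'a) (g :: 'a) (\<sigma> :: real) (\<alpha> :: real) (J :: nat set).
      prob_space M \<and>
      (\<forall>i\<in>{1..n-f}. V i \<in> borel_measurable M \<and> distr M borel (V i) = G) \<and>
      prob_space.indep_vars M (\<lambda>_. borel) V {1..n-f} \<and>
      (\<forall>i\<in>{1..f}. B i \<in> borel_measurable M) \<and>
      integrable G (\<lambda>x. x) \<and> g = (\<integral>x. x \<partial>G) \<and>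
      integrable G (\<lambda>x. (norm (x - g))\<^sup>2) \<and>
      (\<integral>x. (norm (x - g))\<^sup>2 \<partial>G) = real DIM('a) * \<sigma>\<^sup>2 \<and> 0 \<le> \<sigma> \<and>
      eta n f * sqrt (real DIM('a)) * \<sigma> < norm g \<and>
      0 \<le> \<alpha> \<and> \<alpha> < pi / 2 \<and> sin \<alpha> = eta n f * sqrt (real DIM('a)) * \<sigma> / norm g \<and>
      J \<subseteq> {1..n} \<and> card J = f
      \<longrightarrow> (\<integral>\<^sup>+\<omega>. ennreal ((norm (multi_krum n f (byz_inputs n J V B \<omega>))) ^ r) \<partial>M)
          \<le> (\<Sum>rs\<in>moment_exps (n - 1) r.
                ennreal (c rs) * (\<Prod>i<n - 1. \<integral>\<^sup>+x. ennreal ((norm x) ^ rs i) \<partial>G)))"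
    proof (rule exI[of _ c], intro conjI allI impI)
      fix rs show "0 \<le> c rs" unfolding c_def using Kr0 by simp
    next
      fix M :: "'w measure" and G :: "'a measure" and V B :: "nat \<Rightarrow> 'w \<Rightarrow> 'a" and g :: 'a
        and \<sigma> \<alpha> :: real and J :: "nat set"
      assume H: "prob_space M \<and>
        (\<forall>i\<in>{1..n-f}. V i \<in> borel_measurable M \<and> distr M borel (V i) = G) \<and>
        prob_space.indep_vars M (\<lambda>_. borel) V {1..n-f} \<and>
        (\<forall>i\<in>{1..f}. B i \<in> borel_measurable M) \<and>
        integrable G (\<lambda>x. x) \<and> g = (\<integral>x. x \<partial>G) \<and>
        integrable G (\<lambda>x. (norm (x - g))\<^sup>2) \<and>
        (\<integral>x. (norm (x - g))\<^sup>2 \<partial>G) = real DIM('a) * \<sigma>\<^sup>2 \<and> 0 \<le> \<sigma> \<and>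
        eta n f * sqrt (real DIM('a)) * \<sigma> < norm g \<and>
        0 \<le> \<alpha> \<and> \<alpha> < pi / 2 \<and> sin \<alpha> = eta n f * sqrt (real DIM('a)) * \<sigma> / norm g \<and>
        J \<subseteq> {1..n} \<and> card J = f"
      have PM: "prob_space M" using H by blast
      have V: "\<forall>i\<in>{1..n-f}. V i \<in> borel_measurable M \<and> distr M borel (V i) = G" using H by blast
      have J: "J \<subseteq> {1..n}" "card J = f" using H by blast+
      have one: "1 \<in> {1..n-f}" using assms by simp
      have PG: "prob_space G"
      proof -
        have "prob_space (distr M borel (V 1))"
          by (rule prob_space.prob_space_distr[OF PM]) (use V one in auto)
        then show ?thesis using V one by auto
      qed
      have "(\<integral>\<^sup>+\<omega>. ennreal ((norm (multi_krum n f (byz_inputs n J V B \<omega>))) ^ r) \<partial>M)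
          \<le> ennreal Kr * (\<integral>\<^sup>+x. ennreal ((norm x) ^ r) \<partial>G)"
        unfolding Kr_def by (rule part2[OF assms PM V J])
      also have "\<dots> = (\<Sum>rs\<in>moment_exps (n - 1) r.
                ennreal (c rs) * (\<Prod>i<n - 1. \<integral>\<^sup>+x. ennreal ((norm x) ^ rs i) \<partial>G))"
        unfolding c_def by (rule moment_sum[symmetric]) (use assms PG Kr0 in auto)
      finally show "(\<integral>\<^sup>+\<omega>. ennreal ((norm (multi_krum n f (byz_inputs n J V B \<omega>))) ^ r) \<partial>M)
          \<le> (\<Sum>rs\<in>moment_exps (n - 1) r.
                ennreal (c rs) * (\<Prod>i<n - 1. \<integral>\<^sup>+x. ennreal ((norm x) ^ rs i) \<partial>G))" .
    qed
  qed
qed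

end
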